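(* Let $N\ge 2$, $c\in\mathbb{R}$, and consider Jacobi parameters $a_1,\dots,a_{N-1}>0$, $b_1,\dots,b_N\in\mathbb{R}$ with $\sum_{j=1}^N b_j=c$, equipped with the Poisson bracket described in the context. Let $P_n$ be the monic orthogonal polynomials defined in the context. Then for every $1\le n\le N-1$ and every $w\in\mathbb{C}$, \[ \{a_n^2, P_n(w)\} = -\tfrac12\, a_n^2\, P_{n-1}(w). \]
   Context: The Poisson bracket on functions of $(a_1,\dots,a_{N-1},b_1,\dots,b_N)$ is the bilinear antisymmetric bracket satisfying the Leibniz rule whose only nonzero brackets among the coordinates are $\{b_k,a_k\}=-\tfrac14 a_k$ for $k=1,\dots,N-1$ and $\{b_k,a_{k-1}\}=\tfrac14 a_{k-1}$ for $k=2,\dots,N$ (all brackets $\{a_i,a_j\}$, $\{b_i,b_j\}$ and all other $\{b_i,a_j\}$ vanish). Brackets of functions depending on auxiliary complex variables such as $w$ are computed with these variables held fixed. The monic polynomials are defined by $P_{-1}=0$, $P_0=1$, $P_{j+1}(x)=(x-b_{j+1})P_j(x)-a_j^2P_{j-1}(x)$; equivalently $P_n(x)=\det(x-J_n)$ where $J_n$ is the $n\times n$ tridiagonal matrix with diagonal $b_1,\dots,b_n$ and off-diagonal entries $a_1,\dots,a_{n-1}$. *)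

theory Defs
  imports "HOL-Analysis.Analysis"
begin

text \<open>Phase space coordinates: a point is a pair of sequences (a, b); only
  a 1 .. a (N-1) and b 1 .. b N are coordinates. Observables are complex-valued
  functions of the point (auxiliary variables such as w are held fixed).\<close>

type_synonym observable = "(nat \<Rightarrow> real) \<Rightarrow> (nat \<Rightarrow> real) \<Rightarrow> complex"

definition pd_a :: "observable \<Rightarrow> nat \<Rightarrow> (nat \<Rightarrow> real) \<Rightarrow> (nat \<Rightarrow> real) \<Rightarrow> complex" where
  "pd_a F k a b = vector_derivative (\<lambda>t. F (a(k := t)) b) (at (a k))"

definition pd_b :: "observable \<Rightarrow> nat \<Rightarrow> (nat \<Rightarrow> real) \<Rightarrow> (nat \<Rightarrow> real) \<Rightarrow> complex" where
  "pd_b F k a b = vector_derivative (\<lambda>t. F a (b(k := t))) (at (b k))"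

text \<open>The Poisson bracket {F,G} = sum_{x,y} {x,y} dF/dx dG/dy with only nonzero
  brackets {b_k,a_k} = -a_k/4 (1 <= k <= N-1) and {b_k,a_(k-1)} = a_(k-1)/4 (2 <= k <= N).\<close>

definition poisson :: "nat \<Rightarrow> observable \<Rightarrow> observable \<Rightarrow> (nat \<Rightarrow> real) \<Rightarrow> (nat \<Rightarrow> real) \<Rightarrow> complex" where
  "poisson N F G a b =
     (\<Sum>k\<in>{1..N-1}. complex_of_real (- a k / 4) *
        (pd_b F k a b * pd_a G k a b - pd_a F k a b * pd_b G k a b))
   + (\<Sum>k\<in>{2..N}. complex_of_real (a (k-1) / 4) *
        (pd_b F k a b * pd_a G (k-1) a b - pd_a F (k-1) a b * pd_b G k a b))"

fun jacP :: "(nat \<Rightarrow> real) \<Rightarrow> (nat \<Rightarrow> real) \<Rightarrow> nat \<Rightarrow> complex \<Rightarrow> complex" where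
  "jacP a b 0 w = 1"
| "jacP a b (Suc 0) w = w - complex_of_real (b 1)"
| "jacP a b (Suc (Suc j)) w =
     (w - complex_of_real (b (j + 2))) * jacP a b (Suc j) w
     - complex_of_real ((a (j + 1))\<^sup>2) * jacP a b j w"

end

theory Submission
  imports Defs
begin

lemma jacP_indep: "m < k \<Longrightarrow> jacP a (b(k:=t)) m w = jacP a b m w"
  by (induction a b m w rule: jacP.induct) auto

lemma vd_const: "vector_derivative (\<lambda>t::real. (c::complex)) (at x) = 0"
  by (rule vector_derivative_at) (rule has_vector_derivative_const)

lemma pdb_F: "pd_b (\<lambda>a b. complex_of_real ((a n)\<^sup>2)) k a b = 0"
  unfolding pd_b_def by (simp add: vd_const)

lemma pda_F: "pd_a (\<lambda>a b. complex_of_real ((a n)\<^sup>2)) k a b = (if k = n then complex_of_real (2 * a n) else 0)"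
proof (cases "k = n")
  case True
  have "((\<lambda>t. complex_of_real (t\<^sup>2)) has_vector_derivative complex_of_real (2 * a n)) (at (a n))"
  proof -
    have "((\<lambda>t. t\<^sup>2) has_real_derivative (2 * a n)) (at (a n))"
      by (auto intro!: derivative_eq_intros)
    then show ?thesis by (rule has_vector_derivative_of_real)
  qed
  then show ?thesis unfolding pd_a_def using True by (simp add: vector_derivative_at)
next
  case False
  then show ?thesis unfolding pd_a_def by (simp add: vd_const)
qed

lemma pdb_G_above: "n < k \<Longrightarrow> pd_b (\<lambda>a b. jacP a b n w) k a b = 0"
  unfolding pd_b_def by (simp add: jacP_indep vd_const)

lemma jacP_top: "1 \<le> n \<Longrightarrow> jacP a (b(n:=t)) n w =
   (w - of_real t) * jacP a b (n-1) w - (if n \<ge> 2 then of_real ((a (n-1))\<^sup>2) * jacP a b (n-2) w else 0)"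
proof -
  assume n1: "1 \<le> n"
  show ?thesis
proof (cases n)
  case 0 then show ?thesis using n1 by simp
next
  case (Suc m)
  then show ?thesis
  proof (cases m)
    case 0 then show ?thesis using Suc by simp
  next
    case (Suc j)
    then show ?thesis using \<open>n = Suc m\<close> by (simp add: jacP_indep)
  qed
qed
qed

lemma pdb_G_n: "1 \<le> n \<Longrightarrow> pd_b (\<lambda>a b. jacP a b n w) n a b = - jacP a b (n-1) w"
proof -
  assume n: "1 \<le> n"
  define X where "X = jacP a b (n-1) w"
  define Y where "Y = (if n \<ge> 2 then of_real ((a (n-1))\<^sup>2) * jacP a b (n-2) w else (0::complex))"
  have eq: "(\<lambda>t. jacP a (b(n:=t)) n w) = (\<lambda>t. (w - of_real t) * X - Y)"
    using jacP_top[OF n] unfolding X_def Y_def by auto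
  have "((\<lambda>t. (w - of_real t) * X - Y) has_vector_derivative (- X)) (at (b n))"
  proof -
    have "((\<lambda>t::real. t) has_real_derivative 1) (at (b n))"
      by (rule DERIV_ident)
    then have "((\<lambda>t. complex_of_real t) has_vector_derivative 1) (at (b n))"
      using has_vector_derivative_of_real by fastforce
    then have "((\<lambda>t. complex_of_real t * X) has_vector_derivative 1 * X) (at (b n))"
      by (rule has_vector_derivative_mult_left)
    then have "((\<lambda>t. w * X - Y - complex_of_real t * X) has_vector_derivative 0 - 1 * X) (at (b n))"
      by (intro has_vector_derivative_diff has_vector_derivative_const)
    moreover have "(\<lambda>t. w * X - Y - complex_of_real t * X) = (\<lambda>t. (w - of_real t) * X - Y)"
      by (auto simp: algebra_simps)
    ultimately show ?thesis by simp
  qed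
  then show ?thesis unfolding pd_b_def eq X_def by (simp add: vector_derivative_at)
qed

theorem lemma2p2:
  fixes N n :: nat and c :: real and a b :: "nat \<Rightarrow> real" and w :: complex
  assumes "N \<ge> 2"
    and "\<And>k. 1 \<le> k \<Longrightarrow> k \<le> N - 1 \<Longrightarrow> a k > 0"
    and "(\<Sum>j=1..N. b j) = c"
    and "1 \<le> n" and "n \<le> N - 1"
  shows "poisson N (\<lambda>a b. complex_of_real ((a n)\<^sup>2)) (\<lambda>a b. jacP a b n w) a b
         = - (1/2) * complex_of_real ((a n)\<^sup>2) * jacP a b (n - 1) w"
proof -
  let ?F = "\<lambda>a b. complex_of_real ((a n)\<^sup>2)"
  let ?G = "\<lambda>a b. jacP a b n w"
  have s2: "(\<Sum>k\<in>{2..N}. complex_of_real (a (k-1) / 4) *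
        (pd_b ?F k a b * pd_a ?G (k-1) a b - pd_a ?F (k-1) a b * pd_b ?G k a b)) = 0"
  proof (rule sum.neutral, intro ballI)
    fix k assume k: "k \<in> {2..N}"
    show "complex_of_real (a (k-1) / 4) *
        (pd_b ?F k a b * pd_a ?G (k-1) a b - pd_a ?F (k-1) a b * pd_b ?G k a b) = 0"
    proof (cases "k - 1 = n")
      case True
      then have "n < k" using k by auto
      then show ?thesis using pdb_F[of n k a b] pdb_G_above[of n k w a b] by simp
    next
      case False
      then show ?thesis using pdb_F[of n k a b] pda_F[of n "k-1" a b] by simp
    qed
  qed
  have s1: "(\<Sum>k\<in>{1..N-1}. complex_of_real (- a k / 4) *
        (pd_b ?F k a b * pd_a ?G k a b - pd_a ?F k a b * pd_b ?G k a b))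
      = (\<Sum>k\<in>{1..N-1}. if k = n then complex_of_real (- a k / 4) *
        (- complex_of_real (2 * a n) * (- jacP a b (n-1) w)) else 0)"
  proof (rule sum.cong)
    fix k assume "k \<in> {1..N-1}"
    show "complex_of_real (- a k / 4) *
        (pd_b ?F k a b * pd_a ?G k a b - pd_a ?F k a b * pd_b ?G k a b) = (if k = n then complex_of_real (- a k / 4) *
        (- complex_of_real (2 * a n) * (- jacP a b (n-1) w)) else 0)"
      using pdb_F[of n k a b] pda_F[of n k a b] pdb_G_n[OF assms(4), of w a b] by simp
  qed simp
  also have "\<dots> = complex_of_real (- a n / 4) *
        (- complex_of_real (2 * a n) * (- jacP a b (n-1) w))"
    using assms(4,5) by (simp add: sum.delta)
  also have "\<dots> = - (1/2) * complex_of_real ((a n)\<^sup>2) * jacP a b (n - 1) w"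
    by (simp add: power2_eq_square field_simps)
  finally show ?thesis unfolding poisson_def using s2 by simp
qed

end
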